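(* Let $n\ge 1$ and $k\ge 3$ be integers and $p:=k-2$. Let $\{v_1,\dots,v_n\}$ be an orthonormal basis of $\mathbb{R}^n$ and $\lambda_r,\kappa_r\in\mathbb{R}$ with $\kappa_r<0$ for all $r$. Let $\mathcal A=\sum_{r=1}^n\lambda_r v_r^{\otimes k}$, $K=\sum_{r=1}^n\kappa_r v_rv_r^\top$, and consider $\dot x=Kx+\mathcal A x^{k-1}$ with initial condition $x(0)=x_0$ and modal coordinates $y_r(t)=v_r^\top x(t)$. Let $\mathcal I_+:=\{r:\lambda_r>0\}$, $\mathcal I_-:=\{r:\lambda_r<0\}$; for $r\in\mathcal I_+$ let $c_r:=(-\kappa_r/\lambda_r)^{1/p}>0$, and for $p$ odd and $r\in\mathcal I_-$ let $c_r:=-(\kappa_r/\lambda_r)^{1/p}<0$. (i) If $p$ is even and there exists $r\in\mathcal I_+$ with $|v_r^\top x_0|>c_r$, then the solution escapes to infinity in finite time. (ii) If $p$ is odd: if there exists $r\in\mathcal I_+$ with $v_r^\top x_0>c_r$, then the solution escapes in finite time with $y_r(t)\to+\infty$; moreover, for $r\in\mathcal I_+$, any initial condition with $v_r^\top x_0<c_r$ (in particular any $v_r^\top x_0<0$) yields a forward-complete mode $y_r$ converging to $0$. If there exists $r\in\mathcal I_-$ with $v_r^\top x_0<c_r$, then the solution escapes in finite time with $y_r(t)\to-\infty$. In all cases, the (first) finite-time escape time is $T_{\mathrm{esc}}=\min_{r} T_{\mathrm{esc},r}$, where for each mode $r$ with $\lambda_r\neq 0$ whose initial value $y_{r,0}:=v_r^\top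 x_0$ satisfies one of the escape conditions above, $$T_{\mathrm{esc},r}=\frac{1}{p|\kappa_r|}\ln\!\left(\frac{\lambda_r/|\kappa_r|}{\lambda_r/|\kappa_r|-y_{r,0}^{-p}}\right),$$ and $T_{\mathrm{esc},r}=+\infty$ for modes that satisfy no escape condition.
   Context: For $v\in\mathbb{R}^n$, $v^{\otimes k}$ is the $k$th-order tensor with entries $(v^{\otimes k})_{i_1\cdots i_k}=v_{i_1}\cdots v_{i_k}$. For a $k$th-order tensor $\mathcal A=(a_{i_1\cdots i_k})$ and $x\in\mathbb{R}^n$, $(\mathcal A x^{k-1})_i=\sum_{i_2,\dots,i_k=1}^n a_{i i_2\cdots i_k}x_{i_2}\cdots x_{i_k}$. Escape to infinity in finite time means $\|x(t)\|_2\to\infty$ as $t$ approaches a finite time. *)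

theory Defs
  imports "HOL-Analysis.Analysis"
begin

text \<open>Tensors of order k over index type 'n are represented as functions on
  index lists (only lists of length k are meaningful).\<close>
type_synonym 'n tensor = "'n list \<Rightarrow> real"

definition tensor_pow :: "real^'n \<Rightarrow> 'n tensor" where
  "tensor_pow v = (\<lambda>is. prod_list (map (\<lambda>i. v $ i) is))"

definition tensor_apply :: "'n::finite tensor \<Rightarrow> nat \<Rightarrow> real^'n \<Rightarrow> real^'n" where
  "tensor_apply A k x = (\<chi> i. \<Sum>is\<in>{is. length is = k - 1}.
      A (i # is) * prod_list (map (\<lambda>j. x $ j) is))"

definition outer :: "real^'n \<Rightarrow> real^'n \<Rightarrow> real^'n^'n" where
  "outer v w = (\<chi> i j. v $ i * w $ j)"

definition ode_sol :: "(real^'n \<Rightarrow> real^'n) \<Rightarrow> real^'n \<Rightarrow> real \<Rightarrow> (real \<Rightarrow> real^'n) \<Rightarrow> bool" where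
  "ode_sol F x0 T x \<longleftrightarrow> x 0 = x0 \<and>
     (\<forall>t\<in>{0..<T}. (x has_vector_derivative F (x t)) (at t within {0..<T}))"

definition escapes_at :: "(real^'n \<Rightarrow> real^'n) \<Rightarrow> real^'n \<Rightarrow> real \<Rightarrow> bool" where
  "escapes_at F x0 T \<longleftrightarrow> 0 < T \<and>
     (\<forall>T' x. 0 < T' \<and> ode_sol F x0 T' x \<longrightarrow> T' \<le> T) \<and>
     (\<exists>x. ode_sol F x0 T x) \<and>
     (\<forall>x. ode_sol F x0 T x \<longrightarrow> filterlim (\<lambda>t. norm (x t)) at_top (at_left T))"

definition mode_escapes ::
  "(real^'n \<Rightarrow> real^'n) \<Rightarrow> real^'n \<Rightarrow> real^'n \<Rightarrow> (real \<Rightarrow> real) \<Rightarrow> real \<Rightarrow> real filter \<Rightarrow> bool" where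
  "mode_escapes F x0 w g T L \<longleftrightarrow> 0 < T \<and> (\<exists>y. y 0 = w \<bullet> x0 \<and>
     (\<forall>t\<in>{0..<T}. (y has_real_derivative g (y t)) (at t within {0..<T})) \<and>
     filterlim y L (at_left T) \<and>
     (\<forall>T' x. 0 < T' \<and> ode_sol F x0 T' x \<longrightarrow> (\<forall>t\<in>{0..<T'}. t < T \<longrightarrow> w \<bullet> x t = y t)))"

definition mode_global_to_zero ::
  "(real^'n \<Rightarrow> real^'n) \<Rightarrow> real^'n \<Rightarrow> real^'n \<Rightarrow> (real \<Rightarrow> real) \<Rightarrow> bool" where
  "mode_global_to_zero F x0 w g \<longleftrightarrow> (\<exists>y. y 0 = w \<bullet> x0 \<and>
     (\<forall>t\<ge>0. (y has_real_derivative g (y t)) (at t within {0..})) \<and>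
     (y \<longlongrightarrow> 0) at_top \<and>
     (\<forall>T' x. 0 < T' \<and> ode_sol F x0 T' x \<longrightarrow> (\<forall>t\<in>{0..<T'}. w \<bullet> x t = y t)))"

definition c_thr :: "nat \<Rightarrow> real \<Rightarrow> real \<Rightarrow> real" where
  "c_thr p lam kap = (if lam > 0 then root p (- kap / lam) else - root p (kap / lam))"

definition esc_cond :: "nat \<Rightarrow> real \<Rightarrow> real \<Rightarrow> real \<Rightarrow> bool" where
  "esc_cond p lam kap y0 \<longleftrightarrow>
     (even p \<and> lam > 0 \<and> \<bar>y0\<bar> > c_thr p lam kap) \<or>
     (odd p \<and> lam > 0 \<and> y0 > c_thr p lam kap) \<or>
     (odd p \<and> lam < 0 \<and> y0 < c_thr p lam kap)"

definition T_esc_r :: "nat \<Rightarrow> real \<Rightarrow> real \<Rightarrow> real \<Rightarrow> real" where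
  "T_esc_r p lam kap y0 = 1 / (real p * \<bar>kap\<bar>) *
     ln ((lam / \<bar>kap\<bar>) / (lam / \<bar>kap\<bar> - 1 / y0 ^ p))"

end

theory Submission
  imports Defs
begin


definition Wf :: "nat \<Rightarrow> real \<Rightarrow> real \<Rightarrow> real \<Rightarrow> real \<Rightarrow> real" where
  "Wf p a lam y0 t = 1 - (lam * y0 ^ p / a) * (1 - exp (-(real p * a * t)))"

definition Yf :: "nat \<Rightarrow> real \<Rightarrow> real \<Rightarrow> real \<Rightarrow> real \<Rightarrow> real" where
  "Yf p a lam y0 t = y0 * exp (-(a * t)) * Wf p a lam y0 t powr (-1 / real p)"

lemma Wf_deriv: "(Wf p a lam y0 has_real_derivative
   (-(lam * y0 ^ p / a) * (real p * a) * exp (-(real p * a * t)))) (at t)"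
  unfolding Wf_def[abs_def]
  by (auto intro!: derivative_eq_intros)

lemma Yf_0: "Yf p a lam y0 0 = y0"
  by (simp add: Yf_def Wf_def)

lemma Yf_deriv:
  assumes p: "p > 0" and a: "a > 0" and W: "Wf p a lam y0 t > 0"
  shows "(Yf p a lam y0 has_real_derivative
           (-a * Yf p a lam y0 t + lam * Yf p a lam y0 t ^ (p + 1))) (at t)"
proof -
  let ?W = "Wf p a lam y0 t"
  let ?e = "exp (-(a * t))"
  have d: "(Yf p a lam y0 has_real_derivative
     (y0 * (- a * ?e) * ?W powr (-1 / real p) + y0 * ?e *
       ((-1 / real p) * ?W powr (-1 / real p - 1) *
        (-(lam * y0 ^ p / a) * (real p * a) * exp (-(real p * a * t)))))) (at t)"
  proof -
    have w: "((\<lambda>t. Wf p a lam y0 t powr (-1 / real p)) has_real_derivative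
       (-1 / real p) * ?W powr (-1 / real p - 1) *
        (-(lam * y0 ^ p / a) * (real p * a) * exp (-(real p * a * t)))) (at t)"
      using DERIV_fun_powr[OF Wf_deriv W, of "-1 / real p"] by simp
    have e: "((\<lambda>t. exp (-(a * t))) has_real_derivative (- a * ?e)) (at t)"
      by (auto intro!: derivative_eq_intros)
    have "((\<lambda>t. y0 * exp (-(a * t)) * Wf p a lam y0 t powr (-1 / real p)) has_real_derivative
      (y0 * (- a * ?e)) * ?W powr (-1 / real p) + (y0 * ?e) *
       ((-1 / real p) * ?W powr (-1 / real p - 1) *
        (-(lam * y0 ^ p / a) * (real p * a) * exp (-(real p * a * t))))) (at t)"
      by (rule DERIV_cong[OF DERIV_mult[OF DERIV_cmult[OF e] w]]) (simp add: algebra_simps)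
    then show ?thesis unfolding Yf_def[abs_def] by (simp add: algebra_simps)
  qed
  have pw: "(?W powr (-1 / real p)) ^ p = 1 / ?W"
    proof -
    have "(?W powr (-1 / real p)) ^ p = ?W powr (real p * (-1 / real p))"
      using W by (simp add: powr_power)
    also have "\<dots> = ?W powr (-1)" using p by simp
    finally show ?thesis using W by (simp add: powr_neg_one)
  qed
  have pw2: "?W powr (-1 / real p - 1) = ?W powr (-1 / real p) / ?W"
    using W by (simp add: powr_diff)
  have ep: "exp (-(real p * a * t)) = ?e ^ p"
    by (simp add: exp_of_nat_mult[symmetric] mult.assoc)
  have "Yf p a lam y0 t ^ (p + 1) = Yf p a lam y0 t * (y0 ^ p * ?e ^ p / ?W)"
  proof -
    have "Yf p a lam y0 t ^ p = y0 ^ p * ?e ^ p * (?W powr (-1 / real p)) ^ p"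
      unfolding Yf_def power_mult_distrib by simp
    then show ?thesis unfolding pw by (simp add: power_Suc2[of _ p, simplified])
  qed
  then show ?thesis using d
    apply (rule_tac DERIV_cong[OF d])
    using p a W unfolding pw2 ep
    by (simp add: Yf_def field_simps)
qed
lemma Wf_pos_le1:
  assumes a: "a > 0" and b: "lam * y0 ^ p / a \<le> 1" and t: "t \<ge> 0"
  shows "Wf p a lam y0 t > 0"
proof -
  define e where "e = exp (-(real p * a * t))"
  have e0: "e > 0" unfolding e_def by simp
  have e1: "e \<le> 1" unfolding e_def using a t by simp
  define b where "b = lam * y0 ^ p / a"
  have "1 - b * (1 - e) > 0"
  proof (cases "b \<le> 0")
    case True then show ?thesis using e1 by (smt (verit) mult_nonpos_nonneg)
  next
    case False
    then have "b * (1 - e) < b * 1" using e0 by (intro mult_strict_left_mono) auto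
    then show ?thesis using b unfolding b_def by linarith
  qed
  then show ?thesis unfolding Wf_def b_def e_def .
qed

definition Tf :: "nat \<Rightarrow> real \<Rightarrow> real \<Rightarrow> real \<Rightarrow> real" where
  "Tf p a lam y0 = - ln (1 - 1 / (lam * y0 ^ p / a)) / (real p * a)"

lemma Tf_props:
  assumes p: "p > 0" and a: "a > 0" and b: "lam * y0 ^ p / a > 1"
  shows "Tf p a lam y0 > 0" "\<And>t. t < Tf p a lam y0 \<Longrightarrow> Wf p a lam y0 t > 0"
    "Wf p a lam y0 (Tf p a lam y0) = 0"
    "T_esc_r p lam (-a) y0 = Tf p a lam y0"
proof -
  define b where "b = lam * y0 ^ p / a"
  have b1: "b > 1" using b b_def by simp
  have q0: "0 < 1 - 1 / b" "1 - 1 / b < 1" using b1 by (auto simp: field_simps)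
  have pa: "real p * a > 0" using p a by simp
  have lnneg: "ln (1 - 1 / b) < 0" using q0 by simp
  show T0: "Tf p a lam y0 > 0" unfolding Tf_def b_def[symmetric] using divide_neg_pos[OF lnneg pa]
    by simp
  have eT: "exp (-(real p * a * Tf p a lam y0)) = 1 - 1 / b"
    unfolding Tf_def b_def[symmetric] using pa q0 p a by simp
  show "Wf p a lam y0 (Tf p a lam y0) = 0"
    unfolding Wf_def b_def[symmetric] eT using b1 by (simp add: field_simps)
  show "Wf p a lam y0 t > 0" if "t < Tf p a lam y0" for t
  proof -
    have "-(real p * a * t) > -(real p * a * Tf p a lam y0)" using mult_strict_left_mono[OF that pa] by simp
    then have "exp (-(real p * a * t)) > 1 - 1 / b" using eT by (metis exp_less_cancel_iff)
    then have "b * exp (-(real p * a * t)) > b * (1 - 1 / b)" using b1 by simp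
    moreover have "b * (1 - 1 / b) = b - 1" using b1 by (simp add: field_simps)
    moreover have "Wf p a lam y0 t = 1 - b + b * exp (-(real p * a * t))"
      unfolding Wf_def b_def by (simp add: algebra_simps)
    ultimately show ?thesis by linarith
  qed
  have y0: "y0 \<noteq> 0" using b1 b_def p by (auto simp: zero_power)
  have lam0: "lam \<noteq> 0" using b1 unfolding b_def by auto
  have "(lam / \<bar>- a\<bar>) / (lam / \<bar>- a\<bar> - 1 / y0 ^ p) = 1 / (1 - 1 / b)"
    unfolding b_def using a y0 b1 lam0 unfolding b_def by (simp add: field_simps)
  then show "T_esc_r p lam (-a) y0 = Tf p a lam y0"
    unfolding T_esc_r_def Tf_def b_def[symmetric] using a q0 by (simp add: ln_div)
qed

lemma Yf_lim_esc:
  assumes p: "p > 0" and a: "a > 0" and b: "lam * y0 ^ p / a > 1"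
  shows "y0 > 0 \<Longrightarrow> filterlim (Yf p a lam y0) at_top (at_left (Tf p a lam y0))"
    "y0 < 0 \<Longrightarrow> filterlim (Yf p a lam y0) at_bot (at_left (Tf p a lam y0))"
    "filterlim (Yf p a lam y0) at_infinity (at_left (Tf p a lam y0))"
proof -
  let ?T = "Tf p a lam y0"
  let ?W = "Wf p a lam y0"
  note TP = Tf_props[OF p a b]
  have y0: "y0 \<noteq> 0" using b p by (auto simp: zero_power)
  have cW: "isCont ?W ?T" using Wf_deriv DERIV_isCont by blast
  have W0: "(?W \<longlongrightarrow> 0) (at_left ?T)"
    using cW TP(3) unfolding isCont_def by (metis filterlim_at_split)
  have evpos: "eventually (\<lambda>t. ?W t > 0) (at_left ?T)"
    using TP(2) by (auto simp: eventually_at_left_field intro: exI[of _ "?T - 1"])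
  have Wp: "((\<lambda>t. ?W t powr (1 / real p)) \<longlongrightarrow> 0) (at_left ?T)"
    by (rule tendsto_zero_powrI[OF W0 tendsto_const]) (use evpos p in \<open>auto elim: eventually_mono\<close>)
  have inv: "filterlim (\<lambda>t. inverse (?W t powr (1 / real p))) at_top (at_left ?T)"
    by (rule filterlim_inverse_at_top[OF Wp]) (use evpos in \<open>auto elim: eventually_mono\<close>)
  have eq: "Yf p a lam y0 = (\<lambda>t. (y0 * exp (-(a * t))) * inverse (?W t powr (1 / real p)))"
    by (auto simp: Yf_def powr_minus[symmetric] fun_eq_iff)
  have ce: "((\<lambda>t. y0 * exp (-(a * t))) \<longlongrightarrow> y0 * exp (-(a * ?T))) (at_left ?T)"
    by (intro tendsto_intros)
  show top: "filterlim (Yf p a lam y0) at_top (at_left ?T)" if "y0 > 0"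
    unfolding eq by (rule filterlim_tendsto_pos_mult_at_top[OF ce _ inv]) (use that in simp)
  show bot: "filterlim (Yf p a lam y0) at_bot (at_left ?T)" if "y0 < 0"
    unfolding eq by (rule filterlim_tendsto_neg_mult_at_bot[OF ce _ inv]) (use that in \<open>simp add: mult_neg_pos\<close>)
  show "filterlim (Yf p a lam y0) at_infinity (at_left ?T)"
  proof (cases "y0 > 0")
    case True then show ?thesis using top filterlim_mono at_top_le_at_infinity by blast
  next
    case False then have "y0 < 0" using y0 by simp
    then show ?thesis using bot filterlim_mono at_bot_le_at_infinity by blast
  qed
qed

lemma Yf_lim_zero:
  assumes p: "p > 0" and a: "a > 0" and b: "lam * y0 ^ p / a < 1"
  shows "(Yf p a lam y0 \<longlongrightarrow> 0) at_top"
proof -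
  have e1: "((\<lambda>t. exp (-(c * t))) \<longlongrightarrow> 0) at_top" if c: "c > 0" for c :: real
  proof -
    have "filterlim (\<lambda>t. c * t) at_top at_top"
      by (rule filterlim_tendsto_pos_mult_at_top[OF tendsto_const c filterlim_ident])
    then have "filterlim (\<lambda>t. -(c * t)) at_bot at_top"
      by (simp add: filterlim_uminus_at_bot)
    then show ?thesis using exp_at_bot filterlim_compose by blast
  qed
  have pa: "real p * a > 0" using p a by simp
  have W: "(Wf p a lam y0 \<longlongrightarrow> 1 - lam * y0 ^ p / a * (1 - 0)) at_top"
    unfolding Wf_def[abs_def] by (intro tendsto_intros e1[OF pa])
  have "(Yf p a lam y0 \<longlongrightarrow> y0 * 0 * (1 - lam * y0 ^ p / a * (1 - 0)) powr (-1 / real p)) at_top"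
    unfolding Yf_def[abs_def]
    by (intro tendsto_intros e1[OF a] W) (use b in auto)
  then show ?thesis by simp
qed

lemma root_pow_abs: "p > 0 \<Longrightarrow> root p (\<bar>y\<bar> ^ p) = \<bar>y\<bar>"
  by (simp add: real_root_power_cancel)

lemma pos_cmp: assumes p: "p > 0" and l: "lam > 0"
  shows "(\<bar>y\<bar> > root p (a / lam)) \<longleftrightarrow> \<bar>y\<bar> ^ p > a / lam"
    "odd p \<Longrightarrow> (y > root p (a / lam)) \<longleftrightarrow> y ^ p > a / lam"
    "odd p \<Longrightarrow> (y < root p (a / lam)) \<longleftrightarrow> y ^ p < a / lam"
proof -
  show "(\<bar>y\<bar> > root p (a / lam)) \<longleftrightarrow> \<bar>y\<bar> ^ p > a / lam"
    using real_root_less_iff[OF p, of "a / lam" "\<bar>y\<bar> ^ p"] root_pow_abs[OF p] by simp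
  show "odd p \<Longrightarrow> (y > root p (a / lam)) \<longleftrightarrow> y ^ p > a / lam"
    using real_root_less_iff[OF p, of "a / lam" "y ^ p"] odd_real_root_power_cancel by simp
  show "odd p \<Longrightarrow> (y < root p (a / lam)) \<longleftrightarrow> y ^ p < a / lam"
    using real_root_less_iff[OF p, of "y ^ p" "a / lam"] odd_real_root_power_cancel by simp
qed

lemma esc_iff:
  assumes p: "p > 0" and a: "a > 0"
  shows "esc_cond p lam (-a) y0 \<longleftrightarrow> lam * y0 ^ p / a > 1"
proof -
  have r: "lam * y0 ^ p / a > 1 \<longleftrightarrow> lam * y0 ^ p > a" using a by (simp add: field_simps)
  consider "lam > 0" | "lam < 0" | "lam = 0" by linarith
  then show ?thesis
  proof cases
    case 1
    have q: "y0 ^ p > a / lam \<longleftrightarrow> lam * y0 ^ p > a" using 1 by (simp add: field_simps mult.commute)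
    show ?thesis
    proof (cases "even p")
      case True
      then have "\<bar>y0\<bar> ^ p = y0 ^ p" by (simp add: power_even_abs)
      then show ?thesis using True 1 pos_cmp(1)[OF p 1, where y=y0 and a=a] q r
        unfolding esc_cond_def c_thr_def by auto
    next
      case False
      then show ?thesis using 1 pos_cmp(2)[OF p 1, where y=y0 and a=a] q r
        unfolding esc_cond_def c_thr_def by auto
    qed
  next
    case 2
    have c: "c_thr p lam (-a) = root p (a / lam)"
      unfolding c_thr_def using 2 by (simp add: real_root_minus[symmetric])
    show ?thesis
    proof (cases "even p")
      case True
      have "y0 ^ p \<ge> 0" using True by (simp add: zero_le_even_power)
      then have "lam * y0 ^ p \<le> 0" using 2 by (simp add: mult_nonpos_nonneg)
      then show ?thesis using True 2 a r unfolding esc_cond_def by auto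
    next
      case False
      have m: "y0 < root p (a / lam) \<longleftrightarrow> y0 ^ p < a / lam"
        using real_root_less_iff[OF p, of "y0 ^ p" "a / lam"] odd_real_root_power_cancel[OF False] by simp
      have q: "y0 ^ p < a / lam \<longleftrightarrow> lam * y0 ^ p > a" using 2
        by (simp add: pos_less_divide_eq neg_less_divide_eq mult.commute)
      show ?thesis using False 2 m q r c unfolding esc_cond_def by auto
    qed
  next
    case 3
    then show ?thesis using a unfolding esc_cond_def by auto
  qed
qed

lemma zero_cond:
  assumes p: "p > 0" and a: "a > 0" and o: "odd p" and l: "lam > 0"
    and y: "y0 < c_thr p lam (-a)"
  shows "lam * y0 ^ p / a < 1"
proof -
  have "y0 < root p (a / lam)" using y l unfolding c_thr_def by simp
  then have "y0 ^ p < a / lam" using pos_cmp(3)[OF p l o] by simp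
  then show ?thesis using a l by (simp add: field_simps mult.commute)
qed

lemma sign_cond:
  assumes p: "p > 0" and a: "a > 0"
  shows "lam > 0 \<Longrightarrow> y0 > c_thr p lam (-a) \<Longrightarrow> y0 > 0"
    "lam < 0 \<Longrightarrow> y0 < c_thr p lam (-a) \<Longrightarrow> y0 < 0"
proof -
  show "lam > 0 \<Longrightarrow> y0 > c_thr p lam (-a) \<Longrightarrow> y0 > 0"
    unfolding c_thr_def using a p
    by (smt (verit, best) divide_pos_pos real_root_gt_zero)
  show "lam < 0 \<Longrightarrow> y0 < c_thr p lam (-a) \<Longrightarrow> y0 < 0"
    unfolding c_thr_def using a p
    by (smt (verit, best) divide_neg_neg real_root_gt_zero)
qed



lemma poly_lip:
  fixes c1 c2 :: real and m :: nat
  shows "\<exists>L. \<forall>u w. \<bar>u\<bar> \<le> M \<longrightarrow> \<bar>w\<bar> \<le> M \<longrightarrow>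
     \<bar>(c1 * u + c2 * u ^ m) - (c1 * w + c2 * w ^ m)\<bar> \<le> L * \<bar>u - w\<bar>"
proof (intro exI allI impI)
  fix u w :: real assume u: "\<bar>u\<bar> \<le> M" and w: "\<bar>w\<bar> \<le> M"
  have M0: "M \<ge> 0" using u by linarith
  have S: "\<bar>\<Sum>i<m. w ^ (m - Suc i) * u ^ i\<bar> \<le> real m * M ^ (m - 1)"
  proof -
    have "\<bar>\<Sum>i<m. w ^ (m - Suc i) * u ^ i\<bar> \<le> (\<Sum>i<m. \<bar>w ^ (m - Suc i) * u ^ i\<bar>)"
      by (rule sum_abs)
    also have "\<dots> \<le> (\<Sum>i<m. M ^ (m - 1))"
    proof (rule sum_mono)
      fix i assume i: "i \<in> {..<m}"
      have "\<bar>w ^ (m - Suc i) * u ^ i\<bar> = \<bar>w\<bar> ^ (m - Suc i) * \<bar>u\<bar> ^ i"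
        by (simp add: abs_mult power_abs)
      also have "\<dots> \<le> M ^ (m - Suc i) * M ^ i"
        by (intro mult_mono power_mono u w) (auto simp: M0)
      also have "\<dots> = M ^ (m - 1)" using i by (simp add: power_add[symmetric])
      finally show "\<bar>w ^ (m - Suc i) * u ^ i\<bar> \<le> M ^ (m - 1)" .
    qed
    also have "\<dots> = real m * M ^ (m - 1)" by simp
    finally show ?thesis .
  qed
  have "\<bar>(c1 * u + c2 * u ^ m) - (c1 * w + c2 * w ^ m)\<bar>
        = \<bar>c1 * (u - w) + c2 * ((u - w) * (\<Sum>i<m. w ^ (m - Suc i) * u ^ i))\<bar>"
  proof -
    have "(c1 * u + c2 * u ^ m) - (c1 * w + c2 * w ^ m) = c1 * (u - w) + c2 * (u ^ m - w ^ m)"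
      by (simp add: algebra_simps)
    then show ?thesis by (simp only: power_diff_sumr2[of u m w])
  qed
  also have "\<dots> \<le> \<bar>c1\<bar> * \<bar>u - w\<bar> + \<bar>c2\<bar> * (\<bar>u - w\<bar> * \<bar>\<Sum>i<m. w ^ (m - Suc i) * u ^ i\<bar>)"
    by (simp add: abs_mult abs_triangle_ineq[THEN order_trans])
  also have "\<dots> \<le> \<bar>c1\<bar> * \<bar>u - w\<bar> + \<bar>c2\<bar> * (\<bar>u - w\<bar> * (real m * M ^ (m - 1)))"
    by (intro add_left_mono mult_left_mono S) auto
  also have "\<dots> = (\<bar>c1\<bar> + \<bar>c2\<bar> * real m * M ^ (m - 1)) * \<bar>u - w\<bar>"
    by (simp add: algebra_simps)
  finally show "\<bar>(c1 * u + c2 * u ^ m) - (c1 * w + c2 * w ^ m)\<bar>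
     \<le> (\<bar>c1\<bar> + \<bar>c2\<bar> * real m * M ^ (m - 1)) * \<bar>u - w\<bar>" .
qed

lemma ode_uniq:
  fixes g y z :: "real \<Rightarrow> real"
  assumes lip: "\<And>M. \<exists>L. \<forall>u w. \<bar>u\<bar> \<le> M \<longrightarrow> \<bar>w\<bar> \<le> M \<longrightarrow> \<bar>g u - g w\<bar> \<le> L * \<bar>u - w\<bar>"
    and y: "\<forall>t\<in>{0..<T}. (y has_real_derivative g (y t)) (at t within {0..<T})"
    and z: "\<forall>t\<in>{0..<T}. (z has_real_derivative g (z t)) (at t within {0..<T})"
    and y0: "y 0 = z 0"
  shows "\<forall>t\<in>{0..<T}. y t = z t"
proof
  fix t1 assume t1: "t1 \<in> {0..<T}"
  have cy: "continuous_on {0..<T} y" by (rule DERIV_continuous_on) (use y in blast)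
  have cz: "continuous_on {0..<T} z" by (rule DERIV_continuous_on) (use z in blast)
  have sub: "{0..t1} \<subseteq> {0..<T}" using t1 by auto
  have cy1: "continuous_on {0..t1} y" using continuous_on_subset[OF cy sub] .
  have cz1: "continuous_on {0..t1} z" using continuous_on_subset[OF cz sub] .
  obtain My where My: "\<forall>x\<in>y ` {0..t1}. norm x \<le> My"
    using compact_imp_bounded[OF compact_continuous_image[OF cy1 compact_Icc]] unfolding bounded_iff by blast
  obtain Mz where Mz: "\<forall>x\<in>z ` {0..t1}. norm x \<le> Mz"
    using compact_imp_bounded[OF compact_continuous_image[OF cz1 compact_Icc]] unfolding bounded_iff by blast
  define M where "M = max My Mz"
  obtain L where L: "\<forall>u w. \<bar>u\<bar> \<le> M \<longrightarrow> \<bar>w\<bar> \<le> M \<longrightarrow> \<bar>g u - g w\<bar> \<le> L * \<bar>u - w\<bar>"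
    using lip by blast
  have bd: "\<bar>y t\<bar> \<le> M" "\<bar>z t\<bar> \<le> M" if "t \<in> {0..t1}" for t
  proof -
    have "\<bar>y t\<bar> \<le> My" "\<bar>z t\<bar> \<le> Mz" using My Mz that by auto
    then show "\<bar>y t\<bar> \<le> M" "\<bar>z t\<bar> \<le> M" unfolding M_def by auto
  qed
  define h where "h t = (y t - z t)^2 * exp (-(2 * L * t))" for t
  have dec: "h 0 \<ge> h t1"
  proof (rule DERIV_nonpos_imp_decreasing_open[of 0 t1 h])
    show "0 \<le> t1" using t1 by simp
    show "continuous_on {0..t1} h" unfolding h_def
      by (intro continuous_intros cy1 cz1)
    fix t assume t: "0 < t" "t < t1"
    have op: "at t within {0<..<T} = at t" using t t1 by (intro at_within_open) auto
    have dy: "(y has_real_derivative g (y t)) (at t)"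
    proof -
      have "t \<in> {0..<T}" using t t1 by auto
      then have "(y has_real_derivative g (y t)) (at t within {0..<T})" using y by blast
      then have "(y has_real_derivative g (y t)) (at t within {0<..<T})" by (rule DERIV_subset) auto
      then show ?thesis using op by simp
    qed
    have dz: "(z has_real_derivative g (z t)) (at t)"
    proof -
      have "t \<in> {0..<T}" using t t1 by auto
      then have "(z has_real_derivative g (z t)) (at t within {0..<T})" using z by blast
      then have "(z has_real_derivative g (z t)) (at t within {0<..<T})" by (rule DERIV_subset) auto
      then show ?thesis using op by simp
    qed
    have dh: "(h has_real_derivative
       (2 * (y t - z t) * (g (y t) - g (z t))) * exp (-(2 * L * t))
        + (y t - z t)^2 * (exp (-(2 * L * t)) * (-(2 * L)))) (at t)"
    proof -
      have d1: "((\<lambda>t. (y t - z t)^2) has_real_derivative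
          2 * (y t - z t) * (g (y t) - g (z t))) (at t)"
        using DERIV_power[OF DERIV_diff[OF dy dz], of 2] by (simp add: algebra_simps)
      have d2: "((\<lambda>t. exp (-(2 * L * t))) has_real_derivative exp (-(2 * L * t)) * (-(2 * L))) (at t)"
        using DERIV_chain2[OF DERIV_exp DERIV_minus[OF DERIV_cmult[OF DERIV_ident, of "2 * L"]]] by simp
      show ?thesis unfolding h_def[abs_def] by (rule DERIV_cong[OF DERIV_mult[OF d1 d2]]) (simp add: algebra_simps)
    qed
    have "(y t - z t) * (g (y t) - g (z t)) \<le> \<bar>y t - z t\<bar> * \<bar>g (y t) - g (z t)\<bar>"
      by (simp only: abs_mult[symmetric] abs_ge_self)
    also have "\<dots> \<le> \<bar>y t - z t\<bar> * (L * \<bar>y t - z t\<bar>)"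
    proof (rule mult_left_mono)
      have "t \<in> {0..t1}" using t by auto
      then show "\<bar>g (y t) - g (z t)\<bar> \<le> L * \<bar>y t - z t\<bar>" using L bd by blast
    qed simp
    also have "\<dots> = L * (y t - z t)^2" proof -
      have "\<bar>y t - z t\<bar> * \<bar>y t - z t\<bar> = (y t - z t)^2" by (simp add: power2_eq_square abs_mult_self_eq)
      then show ?thesis by (simp add: algebra_simps)
    qed
    finally have "(y t - z t) * (g (y t) - g (z t)) \<le> L * (y t - z t)^2" .
    then have "(2 * (y t - z t) * (g (y t) - g (z t))) * exp (-(2 * L * t))
        + (y t - z t)^2 * (exp (-(2 * L * t)) * (-(2 * L))) \<le> 0"
    proof -
      have "(2 * (y t - z t) * (g (y t) - g (z t))) * exp (-(2 * L * t))
        + (y t - z t)^2 * (exp (-(2 * L * t)) * (-(2 * L)))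
        = 2 * exp (-(2 * L * t)) * ((y t - z t) * (g (y t) - g (z t)) - L * (y t - z t)^2)"
        by (simp add: algebra_simps)
      also have "\<dots> \<le> 0" using \<open>(y t - z t) * (g (y t) - g (z t)) \<le> L * (y t - z t)^2\<close>
        by (simp add: mult_nonneg_nonpos)
      finally show ?thesis .
    qed
    then show "\<exists>d. (h has_real_derivative d) (at t) \<and> d \<le> 0" using dh by blast
  qed
  have "h 0 = 0" unfolding h_def using y0 by simp
  then have "(y t1 - z t1)^2 * exp (-(2 * L * t1)) \<le> 0" using dec unfolding h_def by simp
  then have "(y t1 - z t1)^2 \<le> 0" by (simp add: mult_le_0_iff)
  then show "y t1 = z t1" by simp
qed



lemma lists_Suc_eq:
  "{is :: 'a list. length is = Suc m} = (\<lambda>(i, is). i # is) ` (UNIV \<times> {is. length is = m})"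
  by (auto simp: length_Suc_conv image_iff)

lemma sum_lists_prod:
  fixes f :: "'n::finite \<Rightarrow> real"
  shows "(\<Sum>is\<in>{is. length is = m}. prod_list (map f is)) = (\<Sum>j\<in>UNIV. f j) ^ m"
proof (induction m)
  case 0
  then show ?case by simp
next
  case (Suc m)
  have inj: "inj_on (\<lambda>(i, is). i # is) (UNIV \<times> {is :: 'n list. length is = m})"
    by (auto simp: inj_on_def)
  have "(\<Sum>is\<in>{is. length is = Suc m}. prod_list (map f is))
      = (\<Sum>(i, is)\<in>UNIV \<times> {is :: 'n list. length is = m}. f i * prod_list (map f is))"
    unfolding lists_Suc_eq by (subst sum.reindex[OF inj]) (simp add: case_prod_unfold)
  also have "\<dots> = (\<Sum>i\<in>UNIV. \<Sum>is\<in>{is :: 'n list. length is = m}. f i * prod_list (map f is))"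
    by (rule sum.cartesian_product[symmetric])
  also have "\<dots> = (\<Sum>i\<in>UNIV. f i * (\<Sum>j\<in>UNIV. f j) ^ m)"
    by (simp add: sum_distrib_left[symmetric] Suc.IH)
  also have "\<dots> = (\<Sum>j\<in>UNIV. f j) ^ Suc m"
    by (simp add: sum_distrib_right[symmetric])
  finally show ?case .
qed

lemma prod_list_map_mult: "prod_list (map (\<lambda>j. f j * g j) xs) = prod_list (map f xs) * prod_list (map g xs)"
  for f g :: "'a \<Rightarrow> real"
  by (induction xs) auto

lemma tensor_formula:
  fixes v :: "'n::finite \<Rightarrow> real^'n" and lam :: "'n \<Rightarrow> real"
  assumes k: "k \<ge> 1"
  shows "tensor_apply (\<lambda>is. \<Sum>r\<in>UNIV. lam r * tensor_pow (v r) is) k x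
    = (\<Sum>r\<in>UNIV. (lam r * (v r \<bullet> x) ^ (k - 1)) *\<^sub>R v r)"
proof (rule vec_eq_iff[THEN iffD2], rule allI)
  fix i
  have "tensor_apply (\<lambda>is. \<Sum>r\<in>UNIV. lam r * tensor_pow (v r) is) k x $ i
     = (\<Sum>is\<in>{is. length is = k - 1}. \<Sum>r\<in>UNIV.
         lam r * (v r $ i) * prod_list (map (\<lambda>j. v r $ j * x $ j) is))"
    unfolding tensor_apply_def tensor_pow_def
    by (simp add: sum_distrib_right prod_list_map_mult mult.assoc)
  also have "\<dots> = (\<Sum>r\<in>UNIV. lam r * (v r $ i) *
      (\<Sum>is\<in>{is. length is = k - 1}. prod_list (map (\<lambda>j. v r $ j * x $ j) is)))"
    by (subst sum.swap) (simp add: sum_distrib_left)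
  also have "\<dots> = (\<Sum>r\<in>UNIV. lam r * (v r $ i) * (v r \<bullet> x) ^ (k - 1))"
    by (simp add: sum_lists_prod inner_vec_def)
  also have "\<dots> = (\<Sum>r\<in>UNIV. (lam r * (v r \<bullet> x) ^ (k - 1)) *\<^sub>R v r) $ i"
    by (simp add: sum_component algebra_simps)
  finally show "tensor_apply (\<lambda>is. \<Sum>r\<in>UNIV. lam r * tensor_pow (v r) is) k x $ i
     = (\<Sum>r\<in>UNIV. (lam r * (v r \<bullet> x) ^ (k - 1)) *\<^sub>R v r) $ i" .
qed

lemma K_formula:
  fixes v :: "'n::finite \<Rightarrow> real^'n" and kap :: "'n \<Rightarrow> real"
  shows "(\<Sum>r\<in>UNIV. kap r *\<^sub>R outer (v r) (v r)) *v x = (\<Sum>r\<in>UNIV. (kap r * (v r \<bullet> x)) *\<^sub>R v r)"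
proof (rule vec_eq_iff[THEN iffD2], rule allI)
  fix i
  have "((\<Sum>r\<in>UNIV. kap r *\<^sub>R outer (v r) (v r)) *v x) $ i
      = (\<Sum>j\<in>UNIV. \<Sum>r\<in>UNIV. kap r * (v r $ i * v r $ j) * x $ j)"
    by (simp add: matrix_vector_mult_def outer_def sum_component sum_distrib_right)
  also have "\<dots> = (\<Sum>r\<in>UNIV. kap r * v r $ i * (\<Sum>j\<in>UNIV. v r $ j * x $ j))"
    by (subst sum.swap) (simp add: sum_distrib_left algebra_simps)
  also have "\<dots> = (\<Sum>r\<in>UNIV. (kap r * (v r \<bullet> x)) *\<^sub>R v r) $ i"
    by (simp add: sum_component inner_vec_def algebra_simps)
  finally show "((\<Sum>r\<in>UNIV. kap r *\<^sub>R outer (v r) (v r)) *v x) $ i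
      = (\<Sum>r\<in>UNIV. (kap r * (v r \<bullet> x)) *\<^sub>R v r) $ i" .
qed

lemma inner_comb:
  fixes v :: "'n::finite \<Rightarrow> real^'n"
  assumes orth: "\<forall>i j. v i \<bullet> v j = (if i = j then 1 else 0)"
  shows "v s \<bullet> (\<Sum>r\<in>UNIV. c r *\<^sub>R v r) = c s"
proof -
  have "v s \<bullet> (\<Sum>r\<in>UNIV. c r *\<^sub>R v r) = (\<Sum>r\<in>UNIV. c r * (v s \<bullet> v r))"
    by (simp add: inner_sum_right)
  also have "\<dots> = (\<Sum>r\<in>UNIV. if r = s then c r else 0)"
    using orth by (intro sum.cong) auto
  also have "\<dots> = c s" by simp
  finally show ?thesis .
qed

lemma span_expand:
  fixes v :: "'n::finite \<Rightarrow> real^'n"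
  assumes orth: "\<forall>i j. v i \<bullet> v j = (if i = j then 1 else 0)"
  shows "x = (\<Sum>r\<in>UNIV. (v r \<bullet> x) *\<^sub>R v r)"
proof -
  define M :: "real^'n^'n" where "M = (\<chi> r j. v r $ j)"
  have "M ** transpose M = mat 1"
    using orth by (simp add: M_def matrix_matrix_mult_def transpose_def mat_def vec_eq_iff inner_vec_def)
  then have MM: "transpose M ** M = mat 1" using matrix_left_right_inverse by blast
  have c: "(\<Sum>r\<in>UNIV. v r $ i * v r $ j) = (if i = j then 1 else 0)" for i j
  proof -
    have "(transpose M ** M) $ i $ j = (if i = j then 1 else 0)" using MM by (simp add: mat_def)
    then show ?thesis by (simp add: M_def matrix_matrix_mult_def transpose_def mult.commute)
  qed
  show ?thesis
  proof (rule vec_eq_iff[THEN iffD2], rule allI)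
    fix i
    have "(\<Sum>r\<in>UNIV. (v r \<bullet> x) *\<^sub>R v r) $ i = (\<Sum>r\<in>UNIV. \<Sum>j\<in>UNIV. v r $ j * x $ j * v r $ i)"
      by (simp add: sum_component inner_vec_def sum_distrib_right)
    also have "\<dots> = (\<Sum>j\<in>UNIV. x $ j * (\<Sum>r\<in>UNIV. v r $ i * v r $ j))"
      by (subst sum.swap) (simp add: sum_distrib_left algebra_simps)
    also have "\<dots> = (\<Sum>j\<in>UNIV. if i = j then x $ j else 0)" by (intro sum.cong) (auto simp: c)
    also have "\<dots> = x $ i" by simp
    finally show "x $ i = (\<Sum>r\<in>UNIV. (v r \<bullet> x) *\<^sub>R v r) $ i" by simp
  qed
qed



lemma vd_inner:
  fixes x :: "real \<Rightarrow> real^'n"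
  assumes "(x has_vector_derivative x') F"
  shows "((\<lambda>t. c \<bullet> x t) has_real_derivative c \<bullet> x') F"
proof -
  have "((\<lambda>t. c \<bullet> x t) has_derivative (\<lambda>h. c \<bullet> (h *\<^sub>R x'))) F"
    using bounded_linear.has_derivative[OF bounded_linear_inner_right] assms
    unfolding has_vector_derivative_def by blast
  moreover have "(\<lambda>h. c \<bullet> (h *\<^sub>R x')) = (*) (c \<bullet> x')" by (auto simp: fun_eq_iff)
  ultimately show ?thesis unfolding has_field_derivative_def by simp
qed

lemma rd_scale:
  fixes c :: "real^'n"
  assumes "(Y has_real_derivative D) F"
  shows "((\<lambda>t. Y t *\<^sub>R c) has_vector_derivative D *\<^sub>R c) F"
proof -
  have "((\<lambda>t. Y t *\<^sub>R c) has_derivative (\<lambda>h. (D * h) *\<^sub>R c)) F"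
    using bounded_linear.has_derivative[OF bounded_linear_scaleR_left, of Y "(*) D" F c] assms
    unfolding has_field_derivative_def by simp
  then show ?thesis unfolding has_vector_derivative_def by (simp add: mult.commute)
qed

theorem theorem3:
  fixes v :: "'n::finite \<Rightarrow> real^'n" and lam kap :: "'n \<Rightarrow> real" and k p :: nat
    and x0 :: "real^'n" and A :: "'n tensor" and K :: "real^'n^'n"
  assumes k: "k \<ge> 3" and p: "p = k - 2"
    and orthonormal: "\<forall>i j. v i \<bullet> v j = (if i = j then 1 else 0)"
    and kap_neg: "\<forall>r. kap r < 0"
    and A: "A = (\<lambda>is. \<Sum>r\<in>UNIV. lam r * tensor_pow (v r) is)"
    and K: "K = (\<Sum>r\<in>UNIV. kap r *\<^sub>R outer (v r) (v r))"
  shows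
    "(let F = (\<lambda>x. K *v x + tensor_apply A k x);
          E = {r. esc_cond p (lam r) (kap r) (v r \<bullet> x0)};
          Tr = (\<lambda>r. T_esc_r p (lam r) (kap r) (v r \<bullet> x0));
          g = (\<lambda>r y. kap r * y + lam r * y ^ (k - 1))
      in (E \<noteq> {} \<longrightarrow> escapes_at F x0 (Min (Tr ` E))) \<and>
         (\<forall>r. odd p \<and> lam r > 0 \<and> v r \<bullet> x0 > c_thr p (lam r) (kap r) \<longrightarrow>
              mode_escapes F x0 (v r) (g r) (Tr r) at_top) \<and>
         (\<forall>r. odd p \<and> lam r > 0 \<and> v r \<bullet> x0 < c_thr p (lam r) (kap r) \<longrightarrow>
              mode_global_to_zero F x0 (v r) (g r)) \<and>
         (\<forall>r. odd p \<and> lam r < 0 \<and> v r \<bullet> x0 < c_thr p (lam r) (kap r) \<longrightarrow>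
              mode_escapes F x0 (v r) (g r) (Tr r) at_bot))"
proof -
  define F where "F = (\<lambda>x. K *v x + tensor_apply A k x)"
  define E where "E = {r. esc_cond p (lam r) (kap r) (v r \<bullet> x0)}"
  define Tr where "Tr = (\<lambda>r. T_esc_r p (lam r) (kap r) (v r \<bullet> x0))"
  define g where "g = (\<lambda>r y. kap r * y + lam r * y ^ (k - 1))"
  define a where "a = (\<lambda>r. - kap r)"
  define y0 where "y0 = (\<lambda>r. v r \<bullet> x0)"
  define Y where "Y = (\<lambda>r. Yf p (a r) (lam r) (y0 r))"
  define W where "W = (\<lambda>r. Wf p (a r) (lam r) (y0 r))"
  define \<beta> where "\<beta> = (\<lambda>r. lam r * y0 r ^ p / a r)"
  have p0: "p > 0" using k p by simp
  have k1: "k - 1 = p + 1" using k p by simp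
  have apos: "a r > 0" for r using kap_neg a_def by simp
  have kapa: "kap r = - a r" for r using a_def by simp
  have tf: "tensor_apply A k x = (\<Sum>r\<in>UNIV. (lam r * (v r \<bullet> x) ^ (k - 1)) *\<^sub>R v r)" for x
    unfolding A by (rule tensor_formula) (use k in simp)
  have Ffor: "F x = (\<Sum>r\<in>UNIV. g r (v r \<bullet> x) *\<^sub>R v r)" for x
    unfolding F_def K K_formula tf g_def
    by (simp add: scaleR_add_left sum.distrib)
  have vF: "v r \<bullet> F x = g r (v r \<bullet> x)" for r x
    unfolding Ffor by (rule inner_comb[OF orthonormal])
  have dec: "\<forall>t\<in>{0..<T}. ((\<lambda>t. v r \<bullet> x t) has_real_derivative g r (v r \<bullet> x t)) (at t within {0..<T})"
    if "ode_sol F x0 T x" for T x r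
    using that unfolding ode_sol_def using vd_inner vF by metis
  have Yd: "(Y r has_real_derivative g r (Y r t)) (at t)" if "W r t > 0" for r t
    using Yf_deriv[OF p0 apos[of r], of "lam r" "y0 r" t] that unfolding Y_def W_def g_def kapa k1
    by simp
  have lip: "\<exists>L. \<forall>u w. \<bar>u\<bar> \<le> M \<longrightarrow> \<bar>w\<bar> \<le> M \<longrightarrow> \<bar>g r u - g r w\<bar> \<le> L * \<bar>u - w\<bar>" for r M
    unfolding g_def by (rule poly_lip)
  have agree: "\<forall>t\<in>{0..<min T' S}. v r \<bullet> x t = Y r t"
    if W: "\<forall>t\<in>{0..<S}. W r t > 0" and sol: "ode_sol F x0 T' x" for r S T' x
  proof (rule ode_uniq[OF lip])
    show "\<forall>t\<in>{0..<min T' S}. ((\<lambda>t. v r \<bullet> x t) has_real_derivative g r (v r \<bullet> x t))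
        (at t within {0..<min T' S})"
    proof
      fix t assume t: "t \<in> {0..<min T' S}"
      then have "t \<in> {0..<T'}" by simp
      then have "((\<lambda>t. v r \<bullet> x t) has_real_derivative g r (v r \<bullet> x t)) (at t within {0..<T'})"
        using dec[OF sol, of r] by blast
      then show "((\<lambda>t. v r \<bullet> x t) has_real_derivative g r (v r \<bullet> x t)) (at t within {0..<min T' S})"
        by (rule DERIV_subset) auto
    qed
    show "\<forall>t\<in>{0..<min T' S}. (Y r has_real_derivative g r (Y r t)) (at t within {0..<min T' S})"
      using W Yd by (auto intro: has_field_derivative_at_within)
    show "v r \<bullet> x 0 = Y r 0" using sol unfolding ode_sol_def Y_def y0_def by (simp add: Yf_0)
  qed
  have Eiff: "r \<in> E \<longleftrightarrow> \<beta> r > 1" for r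
    unfolding E_def \<beta>_def y0_def using esc_iff[OF p0 apos[of r], of "lam r" "v r \<bullet> x0"] by (simp add: kapa)
  have TrE: "Tr r = Tf p (a r) (lam r) (y0 r)" if "r \<in> E" for r
    using Tf_props(4)[OF p0 apos[of r], of "lam r" "y0 r"] that Eiff unfolding Tr_def \<beta>_def y0_def
    by (simp add: kapa)
  have finE: "finite E" by simp
  have Wpos_nonE: "W r t > 0" if "r \<notin> E" "t \<ge> 0" for r t
  proof -
    have "lam r * y0 r ^ p / a r \<le> 1" using that Eiff \<beta>_def by (simp add: not_less)
    then show ?thesis using Wf_pos_le1[OF apos[of r], of "lam r" "y0 r" p t] that unfolding W_def by simp
  qed
  have bE: "lam r * y0 r ^ p / a r > 1" if "r \<in> E" for r using that Eiff \<beta>_def by simp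
  have Wpos_E: "W r t > 0" if "r \<in> E" "t < Tr r" for r t
    using Tf_props(2)[OF p0 apos[of r] bE[OF that(1)], of t] that TrE unfolding W_def by simp
  have part1: "E \<noteq> {} \<longrightarrow> escapes_at F x0 (Min (Tr ` E))"
  proof
    assume ne: "E \<noteq> {}"
    define Tm where "Tm = Min (Tr ` E)"
    have "Tm \<in> Tr ` E" unfolding Tm_def using finE ne by (intro Min_in) auto
    then obtain r0 where r0: "r0 \<in> E" "Tr r0 = Tm" by auto
    have Tmle: "Tm \<le> Tr r" if "r \<in> E" for r unfolding Tm_def using finE that by simp
    have b0: "lam r0 * y0 r0 ^ p / a r0 > 1" using bE r0 by simp
    have Tm_eq: "Tm = Tf p (a r0) (lam r0) (y0 r0)" using TrE r0 by simp
    have Tm0: "Tm > 0" using Tf_props(1)[OF p0 apos b0] Tm_eq by simp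
    have Wall: "W r t > 0" if "0 \<le> t" "t < Tm" for r t
    proof (cases "r \<in> E")
      case True then show ?thesis using Wpos_E Tmle that by (meson less_le_trans)
    next
      case False then show ?thesis using Wpos_nonE that by simp
    qed
    have Ylim: "filterlim (Y r0) at_infinity (at_left Tm)"
      using Yf_lim_esc(3)[OF p0 apos b0] Tm_eq Y_def by simp
    have agr: "\<forall>t\<in>{0..<Tm}. v r0 \<bullet> x t = Y r0 t" if "ode_sol F x0 T' x" "T' \<ge> Tm" for T' x
    proof -
      have "\<forall>t\<in>{0..<Tm}. W r0 t > 0" using Wall by simp
      then show ?thesis using agree[of Tm r0 T' x] that by (simp add: min_absorb2)
    qed
    have e1: "\<exists>x. ode_sol F x0 Tm x"
    proof (intro exI)
      define X where "X t = (\<Sum>r\<in>UNIV. Y r t *\<^sub>R v r)" for t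
      show "ode_sol F x0 Tm X" unfolding ode_sol_def
      proof (intro conjI ballI)
        show "X 0 = x0" using span_expand[OF orthonormal, of x0] unfolding X_def Y_def y0_def
          by (simp add: Yf_0)
        fix t assume t: "t \<in> {0..<Tm}"
        have vX: "v s \<bullet> X t = Y s t" for s unfolding X_def by (rule inner_comb[OF orthonormal])
        have "(X has_vector_derivative (\<Sum>r\<in>UNIV. g r (Y r t) *\<^sub>R v r)) (at t)"
          unfolding X_def[abs_def] using Wall t by (intro has_vector_derivative_sum rd_scale Yd) auto
        then show "(X has_vector_derivative F (X t)) (at t within {0..<Tm})"
          unfolding Ffor vX by (rule has_vector_derivative_at_within)
      qed
    qed
    have e2: "T' \<le> Tm" if "0 < T' \<and> ode_sol F x0 T' x" for T' x
    proof (rule ccontr)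
      assume "\<not> T' \<le> Tm" then have lt: "Tm < T'" by simp
      have sol: "ode_sol F x0 T' x" using that by blast
      have eq: "\<forall>t\<in>{0..<Tm}. v r0 \<bullet> x t = Y r0 t" using agr[OF sol] lt by simp
      have "Tm \<in> {0..<T'}" using Tm0 lt by simp
      then have "continuous (at Tm within {0..<T'}) (\<lambda>t. v r0 \<bullet> x t)"
        using dec[OF sol, of r0] DERIV_continuous by blast
      then have "((\<lambda>t. v r0 \<bullet> x t) \<longlongrightarrow> v r0 \<bullet> x Tm) (at Tm within {0..Tm})"
        unfolding continuous_within by (rule tendsto_within_subset) (use lt in auto)
      then have c1: "((\<lambda>t. v r0 \<bullet> x t) \<longlongrightarrow> v r0 \<bullet> x Tm) (at_left Tm)"
        using at_within_Icc_at_left[OF Tm0] by simp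
      have ev: "eventually (\<lambda>t. v r0 \<bullet> x t = Y r0 t) (at_left Tm)"
        unfolding eventually_at_left_field using Tm0 eq by (intro exI[of _ 0]) auto
      have "(Y r0 \<longlongrightarrow> v r0 \<bullet> x Tm) (at_left Tm)" using tendsto_cong[OF ev] c1 by simp
      then show False using not_tendsto_and_filterlim_at_infinity[OF _ _ Ylim] by simp
    qed
    have e3: "filterlim (\<lambda>t. norm (x t)) at_top (at_left Tm)" if sol: "ode_sol F x0 Tm x" for x
    proof -
      have eq: "\<forall>t\<in>{0..<Tm}. v r0 \<bullet> x t = Y r0 t" using agr[OF sol order_refl] .
      have n: "filterlim (\<lambda>t. norm (Y r0 t)) at_top (at_left Tm)"
        by (rule filterlim_at_infinity_imp_norm_at_top[OF Ylim])
      have nv: "norm (v r0) = 1" using orthonormal by (simp add: norm_eq_sqrt_inner)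
      have ev: "eventually (\<lambda>t. norm (Y r0 t) \<le> norm (x t)) (at_left Tm)"
        unfolding eventually_at_left_field
      proof (intro exI[of _ 0] conjI allI impI)
        show "0 < Tm" by (rule Tm0)
        fix t :: real assume "0 < t" "t < Tm"
        then have "Y r0 t = v r0 \<bullet> x t" using eq by simp
        then show "norm (Y r0 t) \<le> norm (x t)" using Cauchy_Schwarz_ineq2[of "v r0" "x t"] nv by simp
      qed
      show ?thesis by (rule filterlim_at_top_mono[OF n ev])
    qed
    show "escapes_at F x0 (Min (Tr ` E))" unfolding escapes_at_def Tm_def[symmetric]
      using Tm0 e1 e2 e3 by blast
  qed
  have mode_esc: "mode_escapes F x0 (v r) (g r) (Tr r) L"
    if rE: "r \<in> E" and lim: "filterlim (Y r) L (at_left (Tr r))" for r L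
  proof -
    have T0: "Tr r > 0" using Tf_props(1)[OF p0 apos bE[OF rE]] TrE[OF rE] by simp
    have d: "\<forall>t\<in>{0..<Tr r}. (Y r has_real_derivative g r (Y r t)) (at t within {0..<Tr r})"
    proof
      fix t assume "t \<in> {0..<Tr r}"
      then have "W r t > 0" using Wpos_E[OF rE] by simp
      then show "(Y r has_real_derivative g r (Y r t)) (at t within {0..<Tr r})"
        using Yd has_field_derivative_at_within by blast
    qed
    have ag: "\<forall>T' x. 0 < T' \<and> ode_sol F x0 T' x \<longrightarrow> (\<forall>t\<in>{0..<T'}. t < Tr r \<longrightarrow> v r \<bullet> x t = Y r t)"
    proof (intro allI impI ballI)
      fix T' x t assume a1: "0 < T' \<and> ode_sol F x0 T' x" and a2: "t \<in> {0..<T'}" and a3: "t < Tr r"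
      have "\<forall>t\<in>{0..<Tr r}. W r t > 0" using Wpos_E[OF rE] by simp
      then show "v r \<bullet> x t = Y r t" using agree[of "Tr r" r T' x] a1 a2 a3 by auto
    qed
    have y00: "Y r 0 = v r \<bullet> x0" by (simp add: Y_def y0_def Yf_0)
    show ?thesis unfolding mode_escapes_def using T0 d ag y00 lim by blast
  qed
  have part2: "\<forall>r. odd p \<and> lam r > 0 \<and> v r \<bullet> x0 > c_thr p (lam r) (kap r) \<longrightarrow>
              mode_escapes F x0 (v r) (g r) (Tr r) at_top"
  proof (intro allI impI)
    fix r assume h: "odd p \<and> lam r > 0 \<and> v r \<bullet> x0 > c_thr p (lam r) (kap r)"
    have rE: "r \<in> E" using h unfolding E_def esc_cond_def by auto
    have "y0 r > 0" using sign_cond(1)[OF p0 apos[of r], of "lam r" "y0 r"] h kapa y0_def by simp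
    then have "filterlim (Y r) at_top (at_left (Tr r))"
      using Yf_lim_esc(1)[OF p0 apos bE[OF rE]] TrE[OF rE] Y_def by simp
    then show "mode_escapes F x0 (v r) (g r) (Tr r) at_top" using mode_esc rE by blast
  qed
  have part4: "\<forall>r. odd p \<and> lam r < 0 \<and> v r \<bullet> x0 < c_thr p (lam r) (kap r) \<longrightarrow>
              mode_escapes F x0 (v r) (g r) (Tr r) at_bot"
  proof (intro allI impI)
    fix r assume h: "odd p \<and> lam r < 0 \<and> v r \<bullet> x0 < c_thr p (lam r) (kap r)"
    have rE: "r \<in> E" using h unfolding E_def esc_cond_def by auto
    have "y0 r < 0" using sign_cond(2)[OF p0 apos[of r], of "lam r" "y0 r"] h kapa y0_def by simp
    then have "filterlim (Y r) at_bot (at_left (Tr r))"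
      using Yf_lim_esc(2)[OF p0 apos bE[OF rE]] TrE[OF rE] Y_def by simp
    then show "mode_escapes F x0 (v r) (g r) (Tr r) at_bot" using mode_esc rE by blast
  qed
  have part3: "\<forall>r. odd p \<and> lam r > 0 \<and> v r \<bullet> x0 < c_thr p (lam r) (kap r) \<longrightarrow>
              mode_global_to_zero F x0 (v r) (g r)"
  proof (intro allI impI)
    fix r assume h: "odd p \<and> lam r > 0 \<and> v r \<bullet> x0 < c_thr p (lam r) (kap r)"
    have b: "lam r * y0 r ^ p / a r < 1"
      using zero_cond[OF p0 apos[of r], of "lam r" "y0 r"] h kapa y0_def by simp
    have Wp: "W r t > 0" if "t \<ge> 0" for t
      using Wf_pos_le1[OF apos[of r], of "lam r" "y0 r" p t] b that unfolding W_def by simp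
    have d: "\<forall>t\<ge>0. (Y r has_real_derivative g r (Y r t)) (at t within {0..})"
      using Wp Yd has_field_derivative_at_within by blast
    have lim: "(Y r \<longlongrightarrow> 0) at_top" using Yf_lim_zero[OF p0 apos b] Y_def by simp
    have ag: "\<forall>T' x. 0 < T' \<and> ode_sol F x0 T' x \<longrightarrow> (\<forall>t\<in>{0..<T'}. v r \<bullet> x t = Y r t)"
    proof (intro allI impI)
      fix T' x assume a1: "0 < T' \<and> ode_sol F x0 T' x"
      have "\<forall>t\<in>{0..<T'}. W r t > 0" using Wp by simp
      then show "\<forall>t\<in>{0..<T'}. v r \<bullet> x t = Y r t" using agree[of T' r T' x] a1 by simp
    qed
    have y00: "Y r 0 = v r \<bullet> x0" by (simp add: Y_def y0_def Yf_0)
    show "mode_global_to_zero F x0 (v r) (g r)" unfolding mode_global_to_zero_def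
      using d lim ag y00 by blast
  qed
  show ?thesis using part1 part2 part3 part4 unfolding Let_def F_def E_def Tr_def g_def by blast
qed

end
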